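(* Let $\operatorname{char}(k)\ne2$, let $a_1,\dots,a_r\in X$ and $\mu=[a_r,\dots,a_1]_R$. Then: (i) for every $j$ with $2\le j<r$, $$\mu\sim(-1)^{|a_j||a_{j+1}\cdots a_r|}[a_j,a_r,\dots,a_{j+1},a_{j-1},\dots,a_1]_R;$$ (ii) for all $i,j$ with $2\le j<i\le r$, $$\mu\sim(-1)^{|a_i||a_j\cdots a_{i-1}|+|a_j||a_{j+1}\cdots a_{i-1}|}[a_r,\dots,a_{i+1},a_j,a_{i-1},\dots,a_{j+1},a_i,a_{j-1},\dots,a_1]_R.$$
   Context: A GDN superalgebra is a superalgebra $\mathcal A=\mathcal A_0\oplus\mathcal A_1$ over a field $k$ (product $\circ$, $\mathcal A_i\circ\mathcal A_j\subseteq\mathcal A_{i+j}$ mod 2, $|x|=i$ for nonzero $x\in\mathcal A_i$) satisfying for homogeneous $x,y,z$: $x\circ(y\circ z)-(x\circ y)\circ z=(-1)^{|x||y|}(y\circ(x\circ z)-(y\circ x)\circ z)$ and $(x\circ y)\circ z=(-1)^{|y||z|}(x\circ z)\circ y$. $X=X_0\sqcup X_1$ is well-ordered, elements of $X_i$ have parity $i$, and $\mathrm{GDN}_s(X)$ is the free GDN superalgebra on $X$. Terms over $X$: letters of $X$ and products $(\mu\circ\nu)$ of terms, regarded as elements of $\mathrm{GDN}_s(X)$; length $\ell$ is the number of letters. $[\mu_1,\dots,\mu_n]_R=(\mu_1\circ(\cdots\circ(\mu_{n-1}\circ\mu_n)\cdots))$. Root number: $r(a)=0$ ($a\in X$), $r((\mu\circ\nu))=r(\mu)+1$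 if $\nu\in X$, else $r(\mu)+r(\nu)$. For a string $a_1\cdots a_n$ of letters, $|a_1\cdots a_n|=|a_1|+\dots+|a_n|\pmod 2$, and the empty string has parity $0$. For terms $\mu,\nu$ with $r(\mu)=r(\nu)$, $\ell(\mu)=\ell(\nu)$ and nonzero $\alpha,\beta\in k$, write $\alpha\mu\sim\beta\nu$ if $\alpha\mu-\beta\nu=\sum_i\alpha_i\mu_i$ in $\mathrm{GDN}_s(X)$ for some $\alpha_i\in k$ and terms $\mu_i$ with $\ell(\mu_i)=\ell(\mu)$ and $r(\mu_i)>r(\mu)$. *)

theory Defs
  imports Main
begin

datatype 'x tm = Leaf 'x | Mul "'x tm" "'x tm"

text \<open>The parity function par a = True iff a is in X_1.\<close>
fun tpar :: "('x \<Rightarrow> bool) \<Rightarrow> 'x tm \<Rightarrow> bool" where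
  "tpar par (Leaf a) = par a"
| "tpar par (Mul u v) = (tpar par u \<noteq> tpar par v)"

fun len :: "'x tm \<Rightarrow> nat" where
  "len (Leaf a) = 1"
| "len (Mul u v) = len u + len v"

fun root :: "'x tm \<Rightarrow> nat" where
  "root (Leaf a) = 0"
| "root (Mul u (Leaf b)) = root u + 1"
| "root (Mul u (Mul v w)) = root u + root (Mul v w)"

fun rn :: "'x tm list \<Rightarrow> 'x tm" where
  "rn [t] = t"
| "rn (t # u # ts) = Mul t (rn (u # ts))"
| "rn [] = undefined"

definition spar :: "('x \<Rightarrow> bool) \<Rightarrow> 'x list \<Rightarrow> bool" where
  "spar par xs = odd (length (filter par xs))"

definition sgn1 :: "bool \<Rightarrow> 'k::ring_1" where
  "sgn1 b = (if b then -1 else 1)"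

text \<open>Elements of the free nonassociative algebra: finitely supported
  linear combinations of terms, represented as functions term => k.\<close>
definition single :: "'x tm \<Rightarrow> 'k::field \<Rightarrow> ('x tm \<Rightarrow> 'k)" where
  "single t c = (\<lambda>s. if s = t then c else 0)"

definition lmul :: "'x tm \<Rightarrow> ('x tm \<Rightarrow> 'k::field) \<Rightarrow> ('x tm \<Rightarrow> 'k)" where
  "lmul t f = (\<lambda>s. case s of Mul u v \<Rightarrow> (if u = t then f v else 0) | Leaf _ \<Rightarrow> 0)"

definition rmul :: "('x tm \<Rightarrow> 'k::field) \<Rightarrow> 'x tm \<Rightarrow> ('x tm \<Rightarrow> 'k)" where
  "rmul f t = (\<lambda>s. case s of Mul u v \<Rightarrow> (if v = t then f u else 0) | Leaf _ \<Rightarrow> 0)"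

text \<open>The defining GDN super-identities, instantiated at terms (terms are homogeneous).\<close>
definition rel1 :: "('x \<Rightarrow> bool) \<Rightarrow> 'x tm \<Rightarrow> 'x tm \<Rightarrow> 'x tm \<Rightarrow> ('x tm \<Rightarrow> 'k::field)" where
  "rel1 par x y z = (\<lambda>s.
      single (Mul x (Mul y z)) 1 s - single (Mul (Mul x y) z) 1 s
    - sgn1 (tpar par x \<and> tpar par y) * (single (Mul y (Mul x z)) 1 s - single (Mul (Mul y x) z) 1 s))"

definition rel2 :: "('x \<Rightarrow> bool) \<Rightarrow> 'x tm \<Rightarrow> 'x tm \<Rightarrow> 'x tm \<Rightarrow> ('x tm \<Rightarrow> 'k::field)" where
  "rel2 par x y z = (\<lambda>s.
      single (Mul (Mul x y) z) 1 s - sgn1 (tpar par y \<and> tpar par z) * single (Mul (Mul x z) y) 1 s)"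

text \<open>The ideal of the free nonassociative superalgebra generated by the GDN identities;
  GDN_s(X) is the quotient by it.\<close>
inductive_set gdn_ideal :: "('x \<Rightarrow> bool) \<Rightarrow> ('x tm \<Rightarrow> 'k::field) set" for par where
  gen1: "rel1 par x y z \<in> gdn_ideal par"
| gen2: "rel2 par x y z \<in> gdn_ideal par"
| zero: "(\<lambda>_. 0) \<in> gdn_ideal par"
| add: "f \<in> gdn_ideal par \<Longrightarrow> g \<in> gdn_ideal par \<Longrightarrow> (\<lambda>s. f s + g s) \<in> gdn_ideal par"
| smul: "f \<in> gdn_ideal par \<Longrightarrow> (\<lambda>s. c * f s) \<in> gdn_ideal par"
| lm: "f \<in> gdn_ideal par \<Longrightarrow> lmul t f \<in> gdn_ideal par"
| rm: "f \<in> gdn_ideal par \<Longrightarrow> rmul f t \<in> gdn_ideal par"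

definition sim :: "('x \<Rightarrow> bool) \<Rightarrow> 'k::field \<Rightarrow> 'x tm \<Rightarrow> 'k \<Rightarrow> 'x tm \<Rightarrow> bool" where
  "sim par \<alpha> \<mu> \<beta> \<nu> \<longleftrightarrow>
     root \<mu> = root \<nu> \<and> len \<mu> = len \<nu> \<and> \<alpha> \<noteq> 0 \<and> \<beta> \<noteq> 0 \<and>
     (\<exists>g :: 'x tm \<Rightarrow> 'k. finite {t. g t \<noteq> 0} \<and>
        (\<forall>t. g t \<noteq> 0 \<longrightarrow> len t = len \<mu> \<and> root t > root \<mu>) \<and>
        (\<lambda>s. single \<mu> \<alpha> s - single \<nu> \<beta> s - g s) \<in> gdn_ideal par)"

end

theory Submission
  imports Defs
begin

definition T :: "'x list \<Rightarrow> 'x tm" where "T xs = rn (map Leaf xs)"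

definition E :: "('x \<Rightarrow> bool) \<Rightarrow> nat \<Rightarrow> ('x tm \<Rightarrow> 'k::field) \<Rightarrow> bool" where
  "E par L f \<longleftrightarrow> (\<exists>g. finite {t. g t \<noteq> 0} \<and> (\<forall>t. g t \<noteq> 0 \<longrightarrow> len t = L \<and> root t > 1)
      \<and> (\<lambda>s. f s - g s) \<in> gdn_ideal par)"

lemma T_Cons: "ys \<noteq> [] \<Longrightarrow> T (c # ys) = Mul (Leaf c) (T ys)"
  by (cases ys) (auto simp: T_def)

lemma T_single: "T [c] = Leaf c" by (simp add: T_def)

lemma len_T: "xs \<noteq> [] \<Longrightarrow> len (T xs) = length xs"
proof (induction xs)
  case (Cons c ys) then show ?case by (cases "ys = []") (auto simp: T_single T_Cons)
qed simp

lemma root_Mul_T: "q \<noteq> [] \<Longrightarrow> root (Mul u (T q)) = root u + 1"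
proof (induction q arbitrary: u)
  case (Cons c ys) then show ?case by (cases "ys = []") (auto simp: T_single T_Cons)
qed simp

lemma root_T: "length xs \<ge> 2 \<Longrightarrow> root (T xs) = 1"
proof (cases xs)
  case (Cons c ys)
  assume "length xs \<ge> 2"
  then have "ys \<noteq> []" using Cons by auto
  then show ?thesis using Cons by (simp add: T_Cons root_Mul_T)
qed simp

lemma single_scale: "c * single t 1 s = single t c s"
  by (simp add: single_def)

lemma myupt: "i \<le> j \<Longrightarrow> j \<le> k \<Longrightarrow> [i..<k] = [i..<j] @ [j..<k]"
  by (metis le_add_diff_inverse upt_add_eq_append)

lemma sgn1_mult: "sgn1 a * sgn1 b = (sgn1 (a \<noteq> b) :: 'k::ring_1)"
  by (auto simp: sgn1_def)

lemma sgn1_sq: "sgn1 b * sgn1 b = (1 :: 'k::ring_1)"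
  by (auto simp: sgn1_def)

lemma sgn1_nz: "sgn1 b \<noteq> (0 :: 'k::field)"
  by (auto simp: sgn1_def)

lemma spar_Cons: "spar par (c # b) = (par c \<noteq> spar par b)"
  by (auto simp: spar_def)

lemma spar_rev: "spar par (rev b) = spar par b"
  by (simp add: spar_def rev_filter[symmetric])

lemma E_add: "E par L f \<Longrightarrow> E par L h \<Longrightarrow> E par L (\<lambda>s. f s + h s)"
proof -
  assume "E par L f" "E par L h"
  then obtain g1 g2 where g1: "finite {t. g1 t \<noteq> 0}" "\<forall>t. g1 t \<noteq> 0 \<longrightarrow> len t = L \<and> root t > 1"
      "(\<lambda>s. f s - g1 s) \<in> gdn_ideal par"
    and g2: "finite {t. g2 t \<noteq> 0}" "\<forall>t. g2 t \<noteq> 0 \<longrightarrow> len t = L \<and> root t > 1"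
      "(\<lambda>s. h s - g2 s) \<in> gdn_ideal par" unfolding E_def by blast
  have "{t. g1 t + g2 t \<noteq> 0} \<subseteq> {t. g1 t \<noteq> 0} \<union> {t. g2 t \<noteq> 0}" by auto
  hence "finite {t. g1 t + g2 t \<noteq> 0}" using g1(1) g2(1) by (meson finite_UnI finite_subset)
  moreover have "\<forall>t. g1 t + g2 t \<noteq> 0 \<longrightarrow> len t = L \<and> root t > 1" using g1(2) g2(2) by force
  moreover have "(\<lambda>s. (f s + h s) - (g1 s + g2 s)) \<in> gdn_ideal par"
  proof -
    have "(\<lambda>s. (f s - g1 s) + (h s - g2 s)) \<in> gdn_ideal par" using gdn_ideal.add[OF g1(3) g2(3)] .
    moreover have "(\<lambda>s. (f s - g1 s) + (h s - g2 s)) = (\<lambda>s. (f s + h s) - (g1 s + g2 s))"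
      by (simp add: algebra_simps)
    ultimately show ?thesis by simp
  qed
  ultimately show ?thesis unfolding E_def by (intro exI[of _ "\<lambda>s. g1 s + g2 s"]) simp
qed

lemma E_smul: "E par L f \<Longrightarrow> E par L (\<lambda>s. c * f s)"
proof -
  assume "E par L f"
  then obtain g where g: "finite {t. g t \<noteq> 0}" "\<forall>t. g t \<noteq> 0 \<longrightarrow> len t = L \<and> root t > 1"
      "(\<lambda>s. f s - g s) \<in> gdn_ideal par" unfolding E_def by blast
  have "{t. c * g t \<noteq> 0} \<subseteq> {t. g t \<noteq> 0}" by auto
  hence "finite {t. c * g t \<noteq> 0}" using g(1) finite_subset by blast
  moreover have "\<forall>t. c * g t \<noteq> 0 \<longrightarrow> len t = L \<and> root t > 1" using g(2) by force
  moreover have "(\<lambda>s. c * f s - c * g s) \<in> gdn_ideal par"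
    using gdn_ideal.smul[OF g(3), of c] by (simp add: algebra_simps)
  ultimately show ?thesis unfolding E_def by (intro exI[of _ "\<lambda>s. c * g s"]) simp
qed

lemma lmul_diff: "lmul t (\<lambda>s. f s - g s) = (\<lambda>s. lmul t f s - lmul t g s)"
  by (auto simp: lmul_def split: tm.split)

lemma lmul_single: "lmul t (single u c) = single (Mul t u) c"
  by (auto simp: lmul_def single_def split: tm.split)

lemma lmul_smul_single: "lmul t (\<lambda>s. c * single u 1 s) = (\<lambda>s. c * single (Mul t u) 1 s)"
  by (auto simp: lmul_def single_def split: tm.split)

lemma E_lmul: "E par L f \<Longrightarrow> E par (Suc L) (lmul (Leaf a) f)"
proof -
  assume "E par L f"
  then obtain g where g: "finite {t. g t \<noteq> 0}" "\<forall>t. g t \<noteq> 0 \<longrightarrow> len t = L \<and> root t > 1"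
      "(\<lambda>s. f s - g s) \<in> gdn_ideal par" unfolding E_def by blast
  let ?g = "lmul (Leaf a) g"
  have ch: "\<exists>v. t = Mul (Leaf a) v \<and> g v \<noteq> 0" if "?g t \<noteq> 0" for t
    using that by (cases t) (auto simp: lmul_def split: if_splits)
  have "{t. ?g t \<noteq> 0} \<subseteq> Mul (Leaf a) ` {t. g t \<noteq> 0}"
    using ch by blast
  hence "finite {t. ?g t \<noteq> 0}" using g(1) finite_subset by blast
  moreover have "\<forall>t. ?g t \<noteq> 0 \<longrightarrow> len t = Suc L \<and> root t > 1"
  proof (intro allI impI)
    fix t assume "?g t \<noteq> 0"
    then obtain v where t: "t = Mul (Leaf a) v" and gv: "g v \<noteq> 0"
      using ch by blast
    have "root v > 1" "len v = L" using g(2) gv by auto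
    then obtain v1 v2 where "v = Mul v1 v2" by (cases v) auto
    then show "len t = Suc L \<and> root t > 1" using t \<open>root v > 1\<close> \<open>len v = L\<close> by simp
  qed
  moreover have "(\<lambda>s. lmul (Leaf a) f s - ?g s) \<in> gdn_ideal par"
    using gdn_ideal.lm[OF g(3), of "Leaf a"] by (simp add: lmul_diff)
  ultimately show ?thesis unfolding E_def by blast
qed

lemma E_zero: "E par L (\<lambda>s. single t 1 s - 1 * single t (1::'k::field) s)"
  unfolding E_def by (rule exI[of _ "\<lambda>_. 0"]) (simp add: gdn_ideal.zero)

lemma E_trans:
  assumes "E par L (\<lambda>s. single A 1 s - c1 * single B (1::'k::field) s)"
    and "E par L (\<lambda>s. single B 1 s - c2 * single C (1::'k) s)"
  shows "E par L (\<lambda>s. single A 1 s - (c1 * c2) * single C (1::'k) s)"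
proof -
  have "E par L (\<lambda>s. (single A 1 s - c1 * single B (1::'k) s) + c1 * (single B 1 s - c2 * single C (1::'k) s))"
    using E_add[OF assms(1) E_smul[OF assms(2)]] .
  moreover have "(\<lambda>s. (single A 1 s - c1 * single B (1::'k) s) + c1 * (single B 1 s - c2 * single C (1::'k) s))
     = (\<lambda>s. single A 1 s - (c1 * c2) * single C (1::'k) s)" by (simp add: algebra_simps)
  ultimately show ?thesis by simp
qed

lemma E_sym:
  assumes "c * c = 1" "E par L (\<lambda>s. single A 1 s - c * single B (1::'k::field) s)"
  shows "E par L (\<lambda>s. single B 1 s - c * single A (1::'k) s)"
proof -
  have "E par L (\<lambda>s. (- c) * (single A 1 s - c * single B (1::'k) s))"
    using E_smul[OF assms(2)] .
  moreover have "(\<lambda>s. (- c) * (single A 1 s - c * single B (1::'k) s))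
     = (\<lambda>s. single B 1 s - c * single A (1::'k) s)"
    using assms(1) by (auto simp: algebra_simps)
  ultimately show ?thesis by simp
qed

lemma swap:
  assumes "q \<noteq> []"
  shows "E par (length p + 2 + length q)
    (\<lambda>s. single (T (p @ x # y # q)) 1 s - sgn1 (par x \<and> par y) * single (T (p @ y # x # q)) (1::'k::field) s)"
proof (induction p)
  case Nil
  let ?z = "T q"
  let ?sg = "sgn1 (par x \<and> par y) :: 'k"
  define g where "g = (\<lambda>s. single (Mul (Mul (Leaf x) (Leaf y)) ?z) (1::'k) s
        - ?sg * single (Mul (Mul (Leaf y) (Leaf x)) ?z) 1 s)"
  have sup: "t = Mul (Mul (Leaf x) (Leaf y)) ?z \<or> t = Mul (Mul (Leaf y) (Leaf x)) ?z" if "g t \<noteq> 0" for t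
    using that unfolding g_def single_def by (auto split: if_splits)
  have "{t. g t \<noteq> 0} \<subseteq> {Mul (Mul (Leaf x) (Leaf y)) ?z, Mul (Mul (Leaf y) (Leaf x)) ?z}"
    using sup by blast
  hence "finite {t. g t \<noteq> 0}" using finite_subset by blast
  moreover have "\<forall>t. g t \<noteq> 0 \<longrightarrow> len t = length ([] @ x # y # q) \<and> root t > 1"
  proof (intro allI impI)
    fix t assume "g t \<noteq> 0"
    then have "t = Mul (Mul (Leaf x) (Leaf y)) ?z \<or> t = Mul (Mul (Leaf y) (Leaf x)) ?z" by (rule sup)
    then show "len t = length ([] @ x # y # q) \<and> root t > 1"
      using assms by (elim disjE) (simp_all add: root_Mul_T len_T)
  qed
  moreover have "(\<lambda>s. single (T ([] @ x # y # q)) 1 s - ?sg * single (T ([] @ y # x # q)) (1::'k) s - g s)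
      = rel1 par (Leaf x) (Leaf y) ?z"
  proof -
    have e1: "T (x # y # q) = Mul (Leaf x) (Mul (Leaf y) ?z)" using assms by (simp add: T_Cons)
    have e2: "T (y # x # q) = Mul (Leaf y) (Mul (Leaf x) ?z)" using assms by (simp add: T_Cons)
    show ?thesis unfolding e1 e2 append_Nil g_def rel1_def tpar.simps
      by (rule ext) (simp add: algebra_simps)
  qed
  ultimately show ?case unfolding E_def using gdn_ideal.gen1[of par "Leaf x" "Leaf y" ?z]
    by (intro exI[of _ g]) simp
next
  case (Cons c p)
  from E_lmul[OF Cons.IH, of c] show ?case
    by (simp add: lmul_diff lmul_single lmul_smul_single T_Cons)
qed

lemma move:
  assumes "q \<noteq> []"
  shows "E par (length p + length b + 1 + length q)
    (\<lambda>s. single (T (p @ b @ x # q)) 1 s - sgn1 (par x \<and> spar par b) * single (T (p @ x # b @ q)) (1::'k::field) s)"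
proof (induction b arbitrary: p)
  case Nil
  show ?case using E_zero by (simp add: sgn1_def spar_def)
next
  case (Cons c b)
  have 1: "E par (length p + length (c # b) + 1 + length q)
    (\<lambda>s. single (T (p @ (c # b) @ x # q)) 1 s - sgn1 (par x \<and> spar par b) * single (T (p @ c # x # b @ q)) (1::'k) s)"
    using Cons.IH[of "p @ [c]"] by simp
  have 2: "E par (length p + length (c # b) + 1 + length q)
    (\<lambda>s. single (T (p @ c # x # b @ q)) 1 s - sgn1 (par c \<and> par x) * single (T (p @ x # c # b @ q)) (1::'k) s)"
    using swap[where q="b @ q" and p=p and x=c and y=x and par=par] assms by (simp add: ac_simps)
  have "sgn1 (par x \<and> spar par b) * sgn1 (par c \<and> par x) = (sgn1 (par x \<and> spar par (c # b)) :: 'k)"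
    by (auto simp: sgn1_def spar_Cons)
  with E_trans[OF 1 2] show ?case by simp
qed

lemma sim_of_E:
  assumes "length xs \<ge> 2" "length ys = length xs"
    "E par L (\<lambda>s. single (T xs) 1 s - c * single (T ys) (1::'k::field) s)"
    "L = length xs" "c \<noteq> 0"
  shows "sim par (1::'k) (T xs) c (T ys)"
proof -
  have "xs \<noteq> []" "ys \<noteq> []" using assms by auto
  then show ?thesis using assms unfolding sim_def E_def
    by (simp add: root_T len_T single_scale)
qed

lemma map_T: "rn (map (\<lambda>l. Leaf (a l)) L) = T (map a L)"
  by (simp add: T_def comp_def)

theorem lemma2p8:
  fixes par :: "'x \<Rightarrow> bool" and a :: "nat \<Rightarrow> 'x" and r :: nat
  assumes char: "(2::'k::field) \<noteq> 0"
  defines "\<mu> \<equiv> rn (map (\<lambda>l. Leaf (a l)) (rev [1..<r+1]))"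
  shows "(\<forall>j. 2 \<le> j \<and> j < r \<longrightarrow>
           sim par (1::'k) \<mu>
             (sgn1 (par (a j) \<and> spar par (map a [j+1..<r+1])))
             (rn (map (\<lambda>l. Leaf (a l)) (j # rev [j+1..<r+1] @ rev [1..<j]))))
       \<and> (\<forall>i j. 2 \<le> j \<and> j < i \<and> i \<le> r \<longrightarrow>
           sim par (1::'k) \<mu>
             (sgn1 ((par (a i) \<and> spar par (map a [j..<i])) \<noteq>
                    (par (a j) \<and> spar par (map a [j+1..<i]))))
             (rn (map (\<lambda>l. Leaf (a l))
                (rev [i+1..<r+1] @ [j] @ rev [j+1..<i] @ [i] @ rev [1..<j]))))"
proof (intro conjI allI impI)
  fix j assume j: "2 \<le> j \<and> j < r"
  have split: "rev [1..<r+1] = rev [j+1..<r+1] @ j # rev [1..<j]"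
  proof -
    have "[1..<r+1] = [1..<j] @ [j..<r+1]" using j myupt[of 1 j "r+1"] by simp
    moreover have "[j..<r+1] = j # [j+1..<r+1]" using j upt_conv_Cons by simp
    ultimately show ?thesis by simp
  qed
  let ?B = "map a (rev [j+1..<r+1])" and ?Q = "map a (rev [1..<j])"
  have Q: "?Q \<noteq> []" using j by simp
  have m: "E par (length ([]::'x list) + length ?B + 1 + length ?Q)
    (\<lambda>s. single (T (?B @ a j # ?Q)) 1 s - sgn1 (par (a j) \<and> spar par ?B) * single (T (a j # ?B @ ?Q)) (1::'k) s)"
    using move[OF Q, where p="[]" and b="?B" and x="a j" and par=par] by (simp only: append_Nil)
  have "sim par (1::'k) (T (?B @ a j # ?Q)) (sgn1 (par (a j) \<and> spar par ?B)) (T (a j # ?B @ ?Q))"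
    using j by (intro sim_of_E[OF _ _ m]) (auto simp: sgn1_nz)
  then show "sim par (1::'k) \<mu>
             (sgn1 (par (a j) \<and> spar par (map a [j+1..<r+1])))
             (rn (map (\<lambda>l. Leaf (a l)) (j # rev [j+1..<r+1] @ rev [1..<j])))"
    unfolding \<mu>_def map_T split by (simp add: rev_map[symmetric] spar_rev)
next
  fix i j assume ij: "2 \<le> j \<and> j < i \<and> i \<le> r"
  have split: "rev [1..<r+1] = rev [i+1..<r+1] @ i # rev [j+1..<i] @ j # rev [1..<j]"
  proof -
    have "[1..<r+1] = [1..<j] @ [j..<i] @ [i..<r+1]" using ij myupt[of 1 j "r+1"]
      myupt[of j i "r+1"] by simp
    moreover have "[j..<i] = j # [j+1..<i]" using ij upt_conv_Cons by simp
    moreover have "[i..<r+1] = i # [i+1..<r+1]" using ij upt_conv_Cons by simp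
    ultimately show ?thesis by simp
  qed
  let ?P = "map a (rev [i+1..<r+1])" and ?B = "map a (rev [j+1..<i])" and ?Q = "map a (rev [1..<j])"
  have Q: "?Q \<noteq> []" using ij by simp
  have m1: "E par (length ?P + length (a i # ?B) + 1 + length ?Q)
    (\<lambda>s. single (T (?P @ (a i # ?B) @ a j # ?Q)) 1 s - sgn1 (par (a j) \<and> spar par (a i # ?B)) * single (T (?P @ a j # (a i # ?B) @ ?Q)) (1::'k) s)"
    using move[OF Q] .
  have m2: "E par (length (?P @ [a j]) + length ?B + 1 + length ?Q)
    (\<lambda>s. single (T ((?P @ [a j]) @ ?B @ a i # ?Q)) 1 s - sgn1 (par (a i) \<and> spar par ?B) * single (T ((?P @ [a j]) @ a i # ?B @ ?Q)) (1::'k) s)"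
    using move[OF Q] .
  have m2': "E par (length ?P + length (a i # ?B) + 1 + length ?Q)
    (\<lambda>s. single (T (?P @ a j # (a i # ?B) @ ?Q)) 1 s - sgn1 (par (a i) \<and> spar par ?B) * single (T (?P @ a j # ?B @ a i # ?Q)) (1::'k) s)"
    using E_sym[OF sgn1_sq m2] by simp
  have m: "E par (length ?P + length (a i # ?B) + 1 + length ?Q)
    (\<lambda>s. single (T (?P @ (a i # ?B) @ a j # ?Q)) 1 s - (sgn1 (par (a j) \<and> spar par (a i # ?B)) * sgn1 (par (a i) \<and> spar par ?B)) * single (T (?P @ a j # ?B @ a i # ?Q)) (1::'k) s)"
    using E_trans[OF m1 m2'] .
  have sg: "sgn1 (par (a j) \<and> spar par (a i # ?B)) * sgn1 (par (a i) \<and> spar par ?B)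
     = (sgn1 ((par (a i) \<and> spar par (map a [j..<i])) \<noteq> (par (a j) \<and> spar par (map a [j+1..<i]))) :: 'k)"
  proof -
    have "[j..<i] = j # [j+1..<i]" using ij upt_conv_Cons by simp
    hence "spar par (map a [j..<i]) = (par (a j) \<noteq> spar par ?B)"
      by (simp add: spar_Cons rev_map[symmetric] spar_rev)
    moreover have "spar par (map a [j+1..<i]) = spar par ?B" by (simp add: rev_map[symmetric] spar_rev)
    ultimately show ?thesis by (auto simp: sgn1_def spar_Cons)
  qed
  have "sim par (1::'k) (T (?P @ (a i # ?B) @ a j # ?Q))
      (sgn1 (par (a j) \<and> spar par (a i # ?B)) * sgn1 (par (a i) \<and> spar par ?B)) (T (?P @ a j # ?B @ a i # ?Q))"
    using ij by (intro sim_of_E[OF _ _ m]) (auto simp: sgn1_nz)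
  then show "sim par (1::'k) \<mu>
             (sgn1 ((par (a i) \<and> spar par (map a [j..<i])) \<noteq>
                    (par (a j) \<and> spar par (map a [j+1..<i]))))
             (rn (map (\<lambda>l. Leaf (a l))
                (rev [i+1..<r+1] @ [j] @ rev [j+1..<i] @ [i] @ rev [1..<j])))"
    unfolding \<mu>_def map_T split sg by simp
qed

end
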